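(* Let $d\ge1$ and let $u_0v_1u_1\cdots v_nu_n$ be an irreducible loop pattern for $\mathcal{M}_d$. Then for every $L\subseteq\Sigma^*$, $\downarrow_{\preceq_d}(u_0v_1^*u_1\cdots v_n^*u_n)\in\mathrm{Adh}_{\preceq_d}(L)$ if and only if the pattern $u_0v_1u_1\cdots v_nu_n$ is associated to $L$.
   Context: $u\preceq_d v$ iff $u=u_0\cdots u_n$ and $v=u_0v_1u_1\cdots v_nu_n$ with each $|v_i|$ divisible by $d$. A loop pattern for $\mathcal{M}_d$ is a word $u_0v_1u_1\cdots v_nu_n$ with that decomposition where $v_i\in(\Sigma^d)^*$ for all $i$. It is irreducible if for each $i\in[1,n]$, deleting the loop $v_i$ yields a strictly smaller ideal: $\downarrow_{\preceq_d}(u_0v_1^*u_1\cdots v_{i-1}^*u_{i-1}u_iv_{i+1}^*\cdots v_n^*u_n)\subsetneq\downarrow_{\preceq_d}(u_0v_1^*u_1\cdots v_n^*u_n)$. The pattern is associated to $L$ if for every $k\ge0$ there is a word $\bar u_0\bar v_1\bar u_1\cdots\bar v_n\bar u_n\in L$ with $v_i^k\preceq_d\bar v_i\in\downarrow_{\preceq_d}v_i^*$ for $i\in[1,n]$, $u_i\preceq_d\bar u_i\in\downarrow_{\preceq_d}(v_i^*u_iv_{i+1}^* )$ for $i\in[1,n-1]$, $u_0\preceq_d\bar u_0\in\downarrow_{\preceq_d}(u_0v_1^* )$ and $u_n\preceq_d\bar u_n\in\downarrow_{\preceq_d}(v_n^*u_n)$. An ideal is a nonempty, downward closed, directed set; $\mathrm{Adh}_{\preceq_d}(L)$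 is the set of $\preceq_d$-ideals $I$ with $I\subseteq\downarrow_{\preceq_d}(L\cap I)$. *)

theory Defs
  imports Main
begin

text \<open>Words over the alphabet 'a are lists. A decomposition u0 v1 u1 ... vn un is
represented by the list us = [u0,...,un] (length n+1) and vs = [v1,...,vn] (length n).\<close>

fun interleave :: "'a list list \<Rightarrow> 'a list list \<Rightarrow> 'a list" where
  "interleave [u] [] = u"
| "interleave (u # us) (v # vs) = u @ v @ interleave us vs"
| "interleave _ _ = []"

definition subword_d :: "nat \<Rightarrow> 'a list \<Rightarrow> 'a list \<Rightarrow> bool" where
  "subword_d d u v \<longleftrightarrow> (\<exists>us vs. length us = length vs + 1 \<and> u = concat us
      \<and> v = interleave us vs \<and> (\<forall>x\<in>set vs. d dvd length x))"

definition down_d :: "nat \<Rightarrow> 'a list set \<Rightarrow> 'a list set" where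
  "down_d d S = {u. \<exists>v\<in>S. subword_d d u v}"

definition ideal_d :: "nat \<Rightarrow> 'a list set \<Rightarrow> bool" where
  "ideal_d d I \<longleftrightarrow> I \<noteq> {}
     \<and> (\<forall>u v. v \<in> I \<longrightarrow> subword_d d u v \<longrightarrow> u \<in> I)
     \<and> (\<forall>x\<in>I. \<forall>y\<in>I. \<exists>z\<in>I. subword_d d x z \<and> subword_d d y z)"

definition Adh_d :: "nat \<Rightarrow> 'a list set \<Rightarrow> 'a list set set" where
  "Adh_d d L = {I. ideal_d d I \<and> I \<subseteq> down_d d (L \<inter> I)}"

definition wstar :: "'a list \<Rightarrow> 'a list set" where
  "wstar v = {concat (replicate k v) | k. True}"

definition pat_lang :: "'a list list \<Rightarrow> 'a list list \<Rightarrow> 'a list set" where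
  "pat_lang us vs = {interleave us ws | ws. length ws = length vs
      \<and> (\<forall>i<length vs. ws ! i \<in> wstar (vs ! i))}"

definition loop_pattern :: "nat \<Rightarrow> 'a list list \<Rightarrow> 'a list list \<Rightarrow> bool" where
  "loop_pattern d us vs \<longleftrightarrow> length us = length vs + 1 \<and> (\<forall>v\<in>set vs. d dvd length v)"

text \<open>Irreducible: deleting the i-th loop (replacing v_i by the empty word, so that
 u_{i-1} u_i become adjacent) yields a strictly smaller ideal.\<close>
definition irreducible_pattern :: "nat \<Rightarrow> 'a list list \<Rightarrow> 'a list list \<Rightarrow> bool" where
  "irreducible_pattern d us vs \<longleftrightarrow> loop_pattern d us vs \<and>
     (\<forall>i<length vs. down_d d (pat_lang us (vs[i := []])) \<subset> down_d d (pat_lang us vs))"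

text \<open>Left / right loop contexts of u_i (0-indexed): v_i^* on the left if i>0,
 v_{i+1}^* on the right if i<n.\<close>
definition left_ctx :: "'a list list \<Rightarrow> nat \<Rightarrow> 'a list set" where
  "left_ctx vs i = (if i = 0 then {[]} else wstar (vs ! (i - 1)))"

definition right_ctx :: "'a list list \<Rightarrow> nat \<Rightarrow> 'a list set" where
  "right_ctx vs i = (if i < length vs then wstar (vs ! i) else {[]})"

definition associated :: "nat \<Rightarrow> 'a list list \<Rightarrow> 'a list list \<Rightarrow> 'a list set \<Rightarrow> bool" where
  "associated d us vs L \<longleftrightarrow> (\<forall>k::nat. \<exists>bus bvs.
      length bus = length us \<and> length bvs = length vs \<and>
      interleave bus bvs \<in> L \<and>
      (\<forall>i<length vs. subword_d d (concat (replicate k (vs ! i))) (bvs ! i)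
                     \<and> bvs ! i \<in> down_d d (wstar (vs ! i))) \<and>
      (\<forall>i<length us. subword_d d (us ! i) (bus ! i)
                     \<and> bus ! i \<in> down_d d {a @ us ! i @ b | a b. a \<in> left_ctx vs i \<and> b \<in> right_ctx vs i}))"

end

theory Submission
  imports Defs
begin

inductive sw :: "nat \<Rightarrow> 'a list \<Rightarrow> 'a list \<Rightarrow> bool" for d where
  sw_nil: "sw d [] []"
| sw_keep: "sw d u v \<Longrightarrow> sw d (a # u) (a # v)"
| sw_skip: "sw d u v \<Longrightarrow> d dvd length x \<Longrightarrow> sw d u (x @ v)"

lemma sw_refl: "sw d u u"
  by (induction u) (auto intro: sw.intros)

lemma sw_length: "sw d u v \<Longrightarrow> \<exists>k. length v = length u + d * k"
proof (induction rule: sw.induct)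
  case sw_nil then show ?case by auto
next
  case (sw_keep u v a) then show ?case by auto
next
  case (sw_skip u v x)
  from sw_skip.IH obtain k where "length v = length u + d*k" by blast
  moreover from sw_skip.hyps(2) obtain j where "length x = d*j" by (auto elim: dvdE)
  ultimately show ?case by (rule_tac x="k+j" in exI) (simp add: algebra_simps)
qed

lemma sw_len_le: "sw d u v \<Longrightarrow> length u \<le> length v"
  using sw_length by (metis le_add1)

lemma sw_len_mod: "sw d u v \<Longrightarrow> length v mod d = length u mod d"
proof -
  assume "sw d u v"
  then obtain k where "length v = length u + d*k" using sw_length by blast
  then show ?thesis by simp
qed

lemma sw_append: "sw d u1 v1 \<Longrightarrow> sw d u2 v2 \<Longrightarrow> sw d (u1 @ u2) (v1 @ v2)"
proof (induction rule: sw.induct)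
  case sw_nil then show ?case by simp
next
  case (sw_keep u v a) then show ?case by (simp add: sw.sw_keep)
next
  case (sw_skip u v x) then show ?case using sw.sw_skip[of d "u@u2" "v@v2" x] by simp
qed

lemma sw_nil_iff: "sw d [] x \<longleftrightarrow> d dvd length x"
proof
  assume "sw d [] x" then obtain k where "length x = 0 + d*k" using sw_length[of d "[]" x] by auto
  then show "d dvd length x" by simp
next
  assume "d dvd length x" then show "sw d [] x" using sw_skip[of d "[]" "[]" x] sw_nil[of d] by simp
qed

lemma sw_split: "sw d z w \<Longrightarrow> z = x @ y \<Longrightarrow> \<exists>w1 w2. w = w1 @ w2 \<and> sw d x w1 \<and> sw d y w2"
proof (induction arbitrary: x y rule: sw.induct)
  case sw_nil then show ?case using sw.sw_nil by blast
next
  case (sw_keep u v a)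
  show ?case
  proof (cases x)
    case Nil
    then have "y = a # u" using sw_keep.prems by simp
    then have "a # v = [] @ (a # v) \<and> sw d x [] \<and> sw d y (a # v)"
      using Nil sw.sw_nil sw.sw_keep[OF sw_keep.hyps] by simp
    then show ?thesis by blast
  next
    case (Cons b x')
    with sw_keep.prems have "b = a" "u = x' @ y" by auto
    with sw_keep.IH obtain w1 w2 where w: "v = w1 @ w2" "sw d x' w1" "sw d y w2" by blast
    have "a # v = (a # w1) @ w2 \<and> sw d x (a#w1) \<and> sw d y w2"
      using w Cons \<open>b = a\<close> sw.sw_keep[OF w(2)] by simp
    then show ?thesis by blast
  qed
next
  case (sw_skip u v s)
  from sw_skip.IH[OF sw_skip.prems] obtain w1 w2 where w: "v = w1 @ w2" "sw d x w1" "sw d y w2" by blast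
  have "s @ v = (s @ w1) @ w2 \<and> sw d x (s@w1) \<and> sw d y w2"
    using w sw.sw_skip[OF w(2) sw_skip.hyps(2)] by simp
  then show ?case by blast
qed

lemma sw_cons_inv: "sw d z w \<Longrightarrow> z = a # v \<Longrightarrow> \<exists>x w'. w = x @ a # w' \<and> d dvd length x \<and> sw d v w'"
proof (induction arbitrary: v rule: sw.induct)
  case sw_nil then show ?case by simp
next
  case (sw_keep u v' b)
  then have "b # v' = [] @ a # v' \<and> d dvd length ([]::'a list) \<and> sw d v v'" by simp
  then show ?case by blast
next
  case (sw_skip u v' s)
  from sw_skip.IH[OF sw_skip.prems] obtain x w' where w: "v' = x @ a # w'" "d dvd length x" "sw d v w'" by blast
  have "s @ v' = (s @ x) @ a # w' \<and> d dvd length (s@x) \<and> sw d v w'"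
    using w sw_skip.hyps(2) by simp
  then show ?case by blast
qed

lemma sw_trans: "sw d u v \<Longrightarrow> sw d v w \<Longrightarrow> sw d u w"
proof (induction arbitrary: w rule: sw.induct)
  case sw_nil then show ?case by simp
next
  case (sw_keep u v a)
  from sw_cons_inv[OF sw_keep.prems refl] obtain x w' where
    w: "w = x @ a # w'" "d dvd length x" "sw d v w'" by blast
  have "sw d u w'" using sw_keep.IH[OF w(3)] .
  then have "sw d (a # u) (x @ a # w')" using sw.sw_skip[OF sw.sw_keep w(2)] by blast
  then show ?case using w(1) by simp
next
  case (sw_skip u v x)
  from sw_split[OF sw_skip.prems refl] obtain w1 w2 where
    w: "w = w1 @ w2" "sw d x w1" "sw d v w2" by blast
  have "length w1 mod d = length x mod d" using sw_len_mod[OF w(2)] .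
  then have "d dvd length w1" using \<open>d dvd length x\<close> by (simp add: mod_eq_0_iff_dvd[symmetric])
  have "sw d u w2" using sw_skip.IH[OF w(3)] .
  then show ?case using w(1) sw.sw_skip[OF _ \<open>d dvd length w1\<close>] by blast
qed

lemma sw_insert: "d dvd length x \<Longrightarrow> sw d (u1 @ u2) (u1 @ x @ u2)"
  by (rule sw_append[OF sw_refl]) (rule sw_skip[OF sw_refl])

lemma sw_ins_left: "d dvd length x \<Longrightarrow> sw d u (x @ u)"
  using sw_insert[of d x "[]" u] by simp

lemma sw_ins_right: "d dvd length x \<Longrightarrow> sw d u (u @ x)"
  using sw_insert[of d x u "[]"] by simp

lemma interleave_cons_hd: "length us = length vs \<Longrightarrow> interleave ((a#u)#us) vs = a # interleave (u#us) vs"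
  by (cases vs; cases us) auto

lemma subword_d_sw: "subword_d d u v \<longleftrightarrow> sw d u v"
proof
  assume "subword_d d u v"
  then obtain us vs where h: "length us = length vs + 1" "u = concat us" "v = interleave us vs"
    "\<forall>x\<in>set vs. d dvd length x" unfolding subword_d_def by blast
  have "length us = length vs + 1 \<Longrightarrow> \<forall>x\<in>set vs. d dvd length x \<Longrightarrow> sw d (concat us) (interleave us vs)"
  proof (induction vs arbitrary: us)
    case Nil then obtain u where "us = [u]" by (cases us) auto
    then show ?case by (simp add: sw_refl)
  next
    case (Cons x vs)
    then obtain u us' where us: "us = u # us'" by (cases us) auto
    with Cons have "sw d (concat us') (interleave us' vs)" by simp
    then have "sw d (concat us') (x @ interleave us' vs)" using Cons.prems by (simp add: sw_skip)
    then show ?case using us by (simp add: sw_append[OF sw_refl])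
  qed
  with h show "sw d u v" by simp
next
  assume "sw d u v"
  then show "subword_d d u v"
  proof (induction rule: sw.induct)
    case sw_nil then show ?case unfolding subword_d_def by (rule_tac x="[[]]" in exI) auto
  next
    case (sw_keep u v a)
    then obtain us vs where h: "length us = length vs + 1" "u = concat us" "v = interleave us vs"
      "\<forall>x\<in>set vs. d dvd length x" unfolding subword_d_def by blast
    then obtain u0 us' where us: "us = u0 # us'" by (cases us) auto
    have "interleave ((a#u0) # us') vs = a # v" using h us interleave_cons_hd[of us' vs a u0] by simp
    moreover have "concat ((a#u0) # us') = a # u" using h us by simp
    ultimately show ?case unfolding subword_d_def using h us
      by (rule_tac x="(a#u0) # us'" in exI, rule_tac x=vs in exI) simp
  next
    case (sw_skip u v x)
    then obtain us vs where h: "length us = length vs + 1" "u = concat us" "v = interleave us vs"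
      "\<forall>x\<in>set vs. d dvd length x" unfolding subword_d_def by blast
    have "interleave ([] # us) (x # vs) = x @ v" using h by simp
    then show ?case unfolding subword_d_def using h sw_skip.hyps(2)
      by (rule_tac x="[] # us" in exI, rule_tac x="x # vs" in exI) simp
  qed
qed

definition pw :: "'a list \<Rightarrow> nat \<Rightarrow> 'a list" where
  "pw v m = concat (replicate m v)"

lemma pw_add: "pw v (a + b) = pw v a @ pw v b"
  unfolding pw_def by (simp add: replicate_add)

lemma pw_0[simp]: "pw v 0 = []" unfolding pw_def by simp
lemma pw_Suc: "pw v (Suc m) = v @ pw v m" unfolding pw_def by simp
lemma pw_nil[simp]: "pw [] m = []" unfolding pw_def by simp

lemma pw_len: "length (pw v m) = m * length v"
  unfolding pw_def by (simp add: length_concat sum_list_replicate)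

lemma pw_dvd: "d dvd length v \<Longrightarrow> d dvd length (pw v m)"
  by (simp add: pw_len)

lemma pw_mono: "a \<le> b \<Longrightarrow> d dvd length v \<Longrightarrow> sw d (pw v a) (pw v b)"
proof -
  assume "a \<le> b" "d dvd length v"
  then have "pw v b = pw v a @ pw v (b - a)" using pw_add[of v a "b-a"] by simp
  then show ?thesis using sw_ins_right[OF pw_dvd[OF \<open>d dvd length v\<close>]] by simp
qed

lemma wstar_pw: "x \<in> wstar v \<longleftrightarrow> (\<exists>m. x = pw v m)"
  unfolding wstar_def pw_def by auto

lemma concat_map_mono: "(\<And>j. j \<in> set xs \<Longrightarrow> sw d (f j) (g j)) \<Longrightarrow>
   sw d (concat (map f xs)) (concat (map g xs))"
  by (induction xs) (auto intro: sw_append sw.sw_nil)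

lemma interleave_conv: "length us = length ws + 1 \<Longrightarrow>
  interleave us ws = concat (map (\<lambda>j. us!j @ ws!j) [0..<length ws]) @ us!(length ws)"
proof (induction ws arbitrary: us)
  case Nil then obtain u where "us = [u]" by (cases us) auto
  then show ?case by simp
next
  case (Cons w ws)
  then obtain u us' where us: "us = u # us'" by (cases us) auto
  have "[0..<length (w#ws)] = 0 # map Suc [0..<length ws]"
    by (simp add: map_Suc_upt upt_conv_Cons del: upt_Suc)
  then show ?case using Cons us by (simp add: comp_def)
qed

lemma upt_split3: "i < n \<Longrightarrow> [0..<n] = [0..<i] @ [i] @ [Suc i..<n]"
proof -
  assume i: "i < n"
  have "[0..<n] = [0..<i] @ [i..<n]" using upt_add_eq_append[of 0 i "n - i"] i by simp
  also have "[i..<n] = i # [Suc i..<n]" using i by (simp add: upt_conv_Cons)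
  finally show ?thesis by simp
qed

locale patt =
  fixes d :: nat and us vs :: "'a list list"
  assumes lenus: "length us = length vs + 1"
    and dv: "\<And>v. v \<in> set vs \<Longrightarrow> d dvd length v"
begin

abbreviation "n \<equiv> length vs"

definition Y :: "nat \<Rightarrow> 'a list" where
  "Y m = concat (map (\<lambda>j. us!j @ pw (vs!j) m) [0..<n]) @ us!n"

definition PRE :: "nat \<Rightarrow> nat \<Rightarrow> 'a list" where
  "PRE m i = concat (map (\<lambda>j. us!j @ pw (vs!j) m) [0..<i]) @ us!i"

definition SUF :: "nat \<Rightarrow> nat \<Rightarrow> 'a list" where
  "SUF m i = concat (map (\<lambda>j. us!j @ pw (vs!j) m) [Suc i..<n]) @ us!n"

lemma dvn: "j < n \<Longrightarrow> d dvd length (vs!j)"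
  using dv nth_mem by blast

lemma Y_split: "i < n \<Longrightarrow> Y m = PRE m i @ pw (vs!i) m @ SUF m i"
proof -
  assume "i < n"
  then have "[0..<n] = [0..<i] @ [i] @ [Suc i..<n]" by (rule upt_split3)
  then show ?thesis unfolding Y_def PRE_def SUF_def by simp
qed

lemma Y_PRE: "Y m = PRE m n"
  unfolding Y_def PRE_def by simp

lemma Y_pat: "interleave us (map (\<lambda>v. pw v m) vs) = Y m"
  unfolding Y_def by (subst interleave_conv) (auto simp: lenus intro!: arg_cong[where f=concat] map_cong)

lemma Y_del: "i < n \<Longrightarrow> interleave us (map (\<lambda>v. pw v m) (vs[i:=[]])) = PRE m i @ SUF m i"
proof -
  assume i: "i < n"
  define F where "F = (\<lambda>j. us!j @ map (\<lambda>v. pw v m) (vs[i:=[]]) ! j)"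
  define G where "G = (\<lambda>j. us!j @ pw (vs!j) m)"
  have sp: "[0..<n] = [0..<i] @ [i] @ [Suc i..<n]" using i by (rule upt_split3)
  have a: "map F [0..<i] = map G [0..<i]"
    using i unfolding F_def G_def by (intro map_cong) (auto simp: nth_list_update)
  have b: "map F [Suc i..<n] = map G [Suc i..<n]"
    using i unfolding F_def G_def by (intro map_cong) (auto simp: nth_list_update)
  have c: "F i = us!i" using i unfolding F_def by simp
  have "interleave us (map (\<lambda>v. pw v m) (vs[i:=[]])) = concat (map F [0..<n]) @ us!n"
    using interleave_conv[of us "map (\<lambda>v. pw v m) (vs[i:=[]])"] lenus unfolding F_def by simp
  also have "\<dots> = concat (map G [0..<i]) @ us!i @ concat (map G [Suc i..<n]) @ us!n"
    unfolding sp map_append a b by (simp add: c)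
  finally show ?thesis unfolding PRE_def SUF_def G_def by simp
qed

lemma PRE_mono: "a \<le> b \<Longrightarrow> i \<le> n \<Longrightarrow> sw d (PRE a i) (PRE b i)"
  unfolding PRE_def by (rule sw_append[OF concat_map_mono sw_refl])
    (auto intro!: sw_append[OF sw_refl] pw_mono dvn)

lemma SUF_mono: "a \<le> b \<Longrightarrow> sw d (SUF a i) (SUF b i)"
  unfolding SUF_def by (rule sw_append[OF concat_map_mono sw_refl])
    (auto intro!: sw_append[OF sw_refl] pw_mono dvn)

lemma Y_mono: "a \<le> b \<Longrightarrow> sw d (Y a) (Y b)"
  using PRE_mono[of a b n] Y_PRE by simp

lemma PRE_mod: "i \<le> n \<Longrightarrow> length (PRE m i) mod d = length (PRE 0 i) mod d"
  using sw_len_mod[OF PRE_mono[of 0 m i]] by simp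

lemma SUF_mod: "length (SUF m i) mod d = length (SUF 0 i) mod d"
  using sw_len_mod[OF SUF_mono[of 0 m i]] by simp

lemma pat_elem: "p \<in> pat_lang us vs \<Longrightarrow> \<exists>c. sw d p (Y c)"
proof -
  assume "p \<in> pat_lang us vs"
  then obtain ws where ws: "p = interleave us ws" "length ws = n" "\<forall>i<n. ws ! i \<in> wstar (vs ! i)"
    unfolding pat_lang_def by blast
  have "\<forall>j. \<exists>m. j < n \<longrightarrow> ws!j = pw (vs!j) m" using ws(3) wstar_pw by blast
  then obtain e where e: "\<And>j. j < n \<Longrightarrow> ws!j = pw (vs!j) (e j)" by metis
  define c where "c = (\<Sum>j<n. e j)"
  have ec: "j < n \<Longrightarrow> e j \<le> c" for j unfolding c_def by (rule member_le_sum) auto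
  have "p = concat (map (\<lambda>j. us!j @ ws!j) [0..<n]) @ us!n"
    using interleave_conv[of us ws] ws lenus by simp
  moreover have "sw d (concat (map (\<lambda>j. us!j @ ws!j) [0..<n])) (concat (map (\<lambda>j. us!j @ pw (vs!j) c) [0..<n]))"
    by (rule concat_map_mono) (auto simp: e intro!: sw_append[OF sw_refl] pw_mono ec dvn)
  ultimately have "sw d p (Y c)" unfolding Y_def by (simp add: sw_append[OF _ sw_refl])
  then show ?thesis by blast
qed

lemma Y_in_pat: "Y m \<in> pat_lang us vs"
  unfolding pat_lang_def wstar_pw
  by (rule CollectI, rule exI[of _ "map (\<lambda>v. pw v m) vs"]) (auto simp: Y_pat)

lemma down_char: "down_d d (pat_lang us vs) = {u. \<exists>m. sw d u (Y m)}"
proof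
  show "down_d d (pat_lang us vs) \<subseteq> {u. \<exists>m. sw d u (Y m)}"
  proof
    fix u assume "u \<in> down_d d (pat_lang us vs)"
    then obtain p where "p \<in> pat_lang us vs" "sw d u p" unfolding down_d_def subword_d_sw by blast
    moreover obtain c where "sw d p (Y c)" using pat_elem[OF \<open>p \<in> pat_lang us vs\<close>] by blast
    ultimately show "u \<in> {u. \<exists>m. sw d u (Y m)}" using sw_trans by blast
  qed
  show "{u. \<exists>m. sw d u (Y m)} \<subseteq> down_d d (pat_lang us vs)"
    unfolding down_d_def subword_d_sw using Y_in_pat by blast
qed

lemma ideal_pat: "ideal_d d (down_d d (pat_lang us vs))"
proof -
  let ?I = "{u. \<exists>m. sw d u (Y m)}"
  have 1: "?I \<noteq> {}" using sw_refl by blast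
  have 2: "\<forall>u v. v \<in> ?I \<longrightarrow> sw d u v \<longrightarrow> u \<in> ?I"
  proof (intro allI impI)
    fix u v assume "v \<in> ?I" "sw d u v"
    then obtain m where "sw d v (Y m)" by blast
    then have "sw d u (Y m)" using \<open>sw d u v\<close> sw_trans by blast
    then show "u \<in> ?I" by blast
  qed
  have 3: "\<forall>x\<in>?I. \<forall>y\<in>?I. \<exists>z\<in>?I. sw d x z \<and> sw d y z"
  proof (intro ballI)
    fix x y assume "x \<in> ?I" "y \<in> ?I"
    then obtain a b where ab: "sw d x (Y a)" "sw d y (Y b)" by blast
    have "sw d (Y a) (Y (a+b))" "sw d (Y b) (Y (a+b))" by (auto intro: Y_mono)
    then have "sw d x (Y (a+b))" "sw d y (Y (a+b))" using ab sw_trans by blast+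
    moreover have "Y (a+b) \<in> ?I" using sw_refl by blast
    ultimately show "\<exists>z\<in>?I. sw d x z \<and> sw d y z" by blast
  qed
  show ?thesis unfolding ideal_d_def down_char subword_d_sw using 1 2 3 by blast
qed

definition A :: "nat \<Rightarrow> nat \<Rightarrow> 'a list" where
  "A c j = (if j = 0 then [] else pw (vs!(j-1)) c)"
definition B :: "nat \<Rightarrow> nat \<Rightarrow> 'a list" where
  "B c j = (if j < n then pw (vs!j) c else [])"

lemma A_mono: "a \<le> b \<Longrightarrow> j \<le> n \<Longrightarrow> sw d (A a j) (A b j)"
  unfolding A_def by (auto intro!: pw_mono dvn sw_refl)
lemma B_mono: "a \<le> b \<Longrightarrow> sw d (B a j) (B b j)"
  unfolding B_def by (auto intro!: pw_mono dvn sw_refl)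

lemma ctx_down: "j \<le> n \<Longrightarrow> x \<in> down_d d {a @ us ! j @ b | a b. a \<in> left_ctx vs j \<and> b \<in> right_ctx vs j}
   \<longleftrightarrow> (\<exists>c. sw d x (A c j @ us!j @ B c j))"
proof
  assume j: "j \<le> n" and "x \<in> down_d d {a @ us ! j @ b | a b. a \<in> left_ctx vs j \<and> b \<in> right_ctx vs j}"
  then obtain a b where ab: "sw d x (a @ us!j @ b)" "a \<in> left_ctx vs j" "b \<in> right_ctx vs j"
    unfolding down_d_def subword_d_sw by blast
  obtain p where p: "a = A p j" using ab(2) unfolding left_ctx_def A_def by (auto simp: wstar_pw split: if_splits)
  obtain q where q: "b = B q j" using ab(3) unfolding right_ctx_def B_def by (auto simp: wstar_pw split: if_splits)
  have "sw d (A p j @ us!j @ B q j) (A (p+q) j @ us!j @ B (p+q) j)"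
    using j by (intro sw_append A_mono B_mono sw_refl) auto
  then show "\<exists>c. sw d x (A c j @ us!j @ B c j)" using ab(1) p q sw_trans by blast
next
  assume "\<exists>c. sw d x (A c j @ us!j @ B c j)"
  then obtain c where "sw d x (A c j @ us!j @ B c j)" by blast
  moreover have "A c j \<in> left_ctx vs j" "B c j \<in> right_ctx vs j"
    unfolding left_ctx_def right_ctx_def A_def B_def by (auto simp: wstar_pw)
  ultimately show "x \<in> down_d d {a @ us ! j @ b | a b. a \<in> left_ctx vs j \<and> b \<in> right_ctx vs j}"
    unfolding down_d_def subword_d_sw by blast
qed

end

lemma uniform_bound: "(\<And>j. j < (N::nat) \<Longrightarrow> \<exists>c. P j c) \<Longrightarrow> (\<And>j a b. j < N \<Longrightarrow> P j (a::nat) \<Longrightarrow> a \<le> b \<Longrightarrow> P j b)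
   \<Longrightarrow> \<exists>c. \<forall>j<N. P j c"
proof (induction N)
  case 0 then show ?case by simp
next
  case (Suc N)
  then obtain c where c: "\<forall>j<N. P j c" by (metis less_SucI)
  obtain c' where c': "P N c'" using Suc.prems(1) by blast
  have "\<forall>j<Suc N. P j (c + c')"
  proof (intro allI impI)
    fix j assume "j < Suc N"
    then show "P j (c + c')"
    proof (cases "j < N")
      case True then show ?thesis using c Suc.prems(2)[of j c "c+c'"] \<open>j < Suc N\<close> by simp
    next
      case False then have "j = N" using \<open>j < Suc N\<close> by simp
      then show ?thesis using c' Suc.prems(2)[of j c' "c+c'"] by simp
    qed
  qed
  then show ?case by blast
qed

lemma telescope: "A 0 = [] \<Longrightarrow> (\<And>j. j < n \<Longrightarrow> B j @ C j @ A (Suc j) = D j) \<Longrightarrow>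
  concat (map (\<lambda>j. A j @ U j @ B j @ C j) [0..<n]) @ A n = concat (map (\<lambda>j. U j @ D j) [0..<n])"
proof (induction n)
  case 0 then show ?case by simp
next
  case (Suc n)
  then have IH: "concat (map (\<lambda>j. A j @ U j @ B j @ C j) [0..<n]) @ A n = concat (map (\<lambda>j. U j @ D j) [0..<n])"
    by simp
  have "B n @ C n @ A (Suc n) = D n" using Suc.prems by simp
  then show ?case using IH by (simp flip: IH)
qed

context patt begin

lemma assoc_imp_adh: "associated d us vs L \<Longrightarrow> down_d d (pat_lang us vs) \<in> Adh_d d L"
proof -
  assume as: "associated d us vs L"
  let ?I = "down_d d (pat_lang us vs)"
  have "?I \<subseteq> down_d d (L \<inter> ?I)"
  proof
    fix u assume "u \<in> ?I"
    then obtain m where um: "sw d u (Y m)" unfolding down_char by blast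
    from as obtain bus bvs where b: "length bus = length us" "length bvs = n" "interleave bus bvs \<in> L"
      "\<forall>i<n. sw d (pw (vs ! i) m) (bvs ! i) \<and> bvs ! i \<in> down_d d (wstar (vs ! i))"
      "\<forall>i<length us. sw d (us ! i) (bus ! i) \<and>
         bus ! i \<in> down_d d {a @ us ! i @ b | a b. a \<in> left_ctx vs i \<and> b \<in> right_ctx vs i}"
      unfolding associated_def subword_d_sw pw_def[symmetric] by blast
    define z where "z = interleave bus bvs"
    have zc: "z = concat (map (\<lambda>j. bus!j @ bvs!j) [0..<n]) @ bus!n"
      unfolding z_def using interleave_conv[of bus bvs] b(1,2) lenus by simp
    have "sw d (Y m) z" unfolding zc Y_def
      using b(4,5) lenus by (intro sw_append concat_map_mono) auto
    then have uz: "sw d u z" using um sw_trans by blast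
    have "\<exists>c. \<forall>j<Suc n. sw d (bus!j) (A c j @ us!j @ B c j)"
    proof (rule uniform_bound)
      fix j assume "j < Suc n"
      then show "\<exists>c. sw d (bus!j) (A c j @ us!j @ B c j)" using b(5) lenus ctx_down[of j "bus!j"] by auto
    next
      fix j a b' assume "j < Suc n" "sw d (bus ! j) (A a j @ us ! j @ B a j)" "a \<le> b'"
      moreover have "sw d (A a j @ us ! j @ B a j) (A b' j @ us ! j @ B b' j)"
        using \<open>j < Suc n\<close> \<open>a \<le> b'\<close> by (intro sw_append A_mono B_mono sw_refl) auto
      ultimately show "sw d (bus ! j) (A b' j @ us ! j @ B b' j)" using sw_trans by blast
    qed
    then obtain c1 where c1: "\<forall>j<Suc n. sw d (bus!j) (A c1 j @ us!j @ B c1 j)" by blast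
    have "\<exists>c. \<forall>j<n. sw d (bvs!j) (pw (vs!j) c)"
    proof (rule uniform_bound)
      fix j assume "j < n"
      then obtain p where "p \<in> wstar (vs!j)" "sw d (bvs!j) p" using b(4) unfolding down_d_def subword_d_sw by blast
      then show "\<exists>c. sw d (bvs!j) (pw (vs!j) c)" unfolding wstar_pw by blast
    next
      fix j a b' assume "j < n" "sw d (bvs ! j) (pw (vs ! j) a)" "a \<le> b'"
      then show "sw d (bvs ! j) (pw (vs ! j) b')" using pw_mono[OF \<open>a \<le> b'\<close> dvn] sw_trans by blast
    qed
    then obtain c2 where c2: "\<forall>j<n. sw d (bvs!j) (pw (vs!j) c2)" by blast
    define c where "c = c1 + c2"
    have "\<forall>j<Suc n. sw d (bus!j) (A c j @ us!j @ B c j)"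
    proof (intro allI impI)
      fix j assume "j < Suc n"
      then have "sw d (A c1 j @ us!j @ B c1 j) (A c j @ us!j @ B c j)"
        unfolding c_def by (intro sw_append A_mono B_mono sw_refl) auto
      then show "sw d (bus!j) (A c j @ us!j @ B c j)" using c1 \<open>j < Suc n\<close> sw_trans by blast
    qed
    moreover have "\<forall>j<n. sw d (bvs!j) (pw (vs!j) c)"
      using c2 unfolding c_def by (metis le_add2 pw_mono dvn sw_trans)
    ultimately have e1: "\<And>j. j \<in> set [0..<n] \<Longrightarrow> sw d (bus!j @ bvs!j) (A c j @ us!j @ B c j @ pw (vs!j) c)"
      using sw_append[of d "bus!_" "A c _ @ us!_ @ B c _" "bvs!_" "pw (vs!_) c"] by simp
    have "sw d z (concat (map (\<lambda>j. A c j @ us!j @ B c j @ pw (vs!j) c) [0..<n]) @ (A c n @ us!n @ B c n))"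
      unfolding zc using \<open>\<forall>j<Suc n. sw d (bus!j) (A c j @ us!j @ B c j)\<close>
      by (intro sw_append concat_map_mono e1) auto
    also have "concat (map (\<lambda>j. A c j @ us!j @ B c j @ pw (vs!j) c) [0..<n]) @ (A c n @ us!n @ B c n)
       = (concat (map (\<lambda>j. A c j @ us!j @ B c j @ pw (vs!j) c) [0..<n]) @ A c n) @ us!n"
      unfolding B_def by simp
    also have "concat (map (\<lambda>j. A c j @ us!j @ B c j @ pw (vs!j) c) [0..<n]) @ A c n
      = concat (map (\<lambda>j. us!j @ pw (vs!j) (c+c+c)) [0..<n])"
      by (rule telescope) (auto simp: A_def B_def pw_add)
    finally have "sw d z (Y (c+c+c))" unfolding Y_def .
    then have "z \<in> ?I" unfolding down_char by blast
    then show "u \<in> down_d d (L \<inter> ?I)" using uz b(3) unfolding z_def down_d_def subword_d_sw by blast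
  qed
  then show ?thesis unfolding Adh_d_def using ideal_pat by blast
qed

end

definition sg :: "'a list list \<Rightarrow> nat \<Rightarrow> nat \<Rightarrow> 'a list" where
  "sg xs a b = concat (take (b - a) (drop a xs))"

lemma sg_split: "a \<le> b \<Longrightarrow> b \<le> c \<Longrightarrow> sg xs a c = sg xs a b @ sg xs b c"
proof -
  assume "a \<le> b" "b \<le> c"
  then have "c - a = (b - a) + (c - b)" by simp
  then have "take (c - a) (drop a xs) = take (b - a) (drop a xs) @ take (c - b) (drop (b - a) (drop a xs))"
    by (simp add: take_add)
  moreover have "drop (b - a) (drop a xs) = drop b xs" using \<open>a \<le> b\<close> by simp
  ultimately show ?thesis unfolding sg_def by simp
qed

lemma sg_all: "sg xs 0 (length xs) = concat xs"
  unfolding sg_def by simp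

lemma sg_mono: "list_all2 (sw d) xs ys \<Longrightarrow> sw d (sg xs a b) (sg ys a b)"
proof -
  assume h: "list_all2 (sw d) xs ys"
  have "list_all2 (sw d) (take (b-a) (drop a xs)) (take (b-a) (drop a ys))"
    using h by (intro list_all2_takeI list_all2_dropI)
  then show ?thesis unfolding sg_def
  proof (induction rule: list_all2_induct)
    case Nil then show ?case by (simp add: sw.sw_nil)
  next
    case (Cons x xs y ys) then show ?case by (simp add: sw_append)
  qed
qed

definition pos :: "'a list list \<Rightarrow> nat \<Rightarrow> nat" where
  "pos ys j = length (sg ys 0 j)"

lemma sg_take_drop: "a \<le> b \<Longrightarrow> b \<le> length ys \<Longrightarrow> sg ys a b = drop (pos ys a) (take (pos ys b) (concat ys))"
proof -
  assume ab: "a \<le> b" "b \<le> length ys"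
  have c: "concat ys = sg ys 0 b @ sg ys b (length ys)" using sg_split[of 0 b "length ys" ys] ab by (simp add: sg_all)
  have "sg ys 0 b = sg ys 0 a @ sg ys a b" using sg_split[of 0 a b ys] ab by simp
  then show ?thesis unfolding pos_def using c by simp
qed

lemma pos_mono: "a \<le> b \<Longrightarrow> pos ys a \<le> pos ys b"
  unfolding pos_def using sg_split[of 0 a b ys] by simp

lemma pos_all: "pos ys (length ys) = length (concat ys)"
  unfolding pos_def sg_all by simp

lemma sw_concat_split: "xs \<noteq> [] \<Longrightarrow> sw d (concat xs) v \<Longrightarrow> \<exists>ys. list_all2 (sw d) xs ys \<and> v = concat ys"
proof (induction xs arbitrary: v)
  case Nil then show ?case by simp
next
  case (Cons x xs)
  show ?case
  proof (cases "xs = []")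
    case True then show ?thesis using Cons.prems by (rule_tac x="[v]" in exI) simp
  next
    case False
    from sw_split[OF Cons.prems(2)] obtain v1 v2 where "v = v1 @ v2" "sw d x v1" "sw d (concat xs) v2"
      by (metis concat.simps(2))
    with Cons.IH[OF False] obtain ys where "list_all2 (sw d) xs ys" "v2 = concat ys" by blast
    then show ?thesis using \<open>v = v1 @ v2\<close> \<open>sw d x v1\<close> by (rule_tac x="v1 # ys" in exI) simp
  qed
qed

lemma three_split: "a \<le> p \<Longrightarrow> p \<le> q \<Longrightarrow> q \<le> b \<Longrightarrow>
  take (b - a) (drop a y) = take (p - a) (drop a y) @ take (q - p) (drop p y) @ take (b - q) (drop q y)"
proof -
  assume h: "a \<le> p" "p \<le> q" "q \<le> b"
  have 2: "take (b-a) (drop a y) = take (p-a) (drop a y) @ take (b-p) (drop p y)"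
    using take_add[of "p-a" "b-p" "drop a y"] h by simp
  have 4: "take (b-p) (drop p y) = take (q-p) (drop p y) @ take (b-q) (drop q y)"
    using take_add[of "q-p" "b-q" "drop p y"] h by simp
  show ?thesis using 2 4 by simp
qed

lemma sub_seg: "a \<le> p \<Longrightarrow> p \<le> q \<Longrightarrow> q \<le> b \<Longrightarrow> b \<le> length y \<Longrightarrow> d dvd (p - a) \<Longrightarrow> d dvd (b - q)
  \<Longrightarrow> sw d (take (q - p) (drop p y)) (take (b - a) (drop a y))"
proof -
  assume h: "a \<le> p" "p \<le> q" "q \<le> b" "b \<le> length y" "d dvd (p - a)" "d dvd (b - q)"
  have l1: "length (take (p - a) (drop a y)) = p - a" using h by simp
  have l2: "length (take (b - q) (drop q y)) = b - q" using h by simp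
  have "sw d (take (q - p) (drop p y)) (take (q - p) (drop p y) @ take (b - q) (drop q y))"
    using h l2 by (intro sw_ins_right) simp
  moreover have "sw d (take (q - p) (drop p y) @ take (b - q) (drop q y)) (take (p - a) (drop a y) @ take (q - p) (drop p y) @ take (b - q) (drop q y))"
    using h l1 by (intro sw_ins_left) simp
  ultimately show ?thesis using three_split[OF h(1-3), of y] sw_trans by metis
qed

lemma dvd_of_mod: "(n::nat) \<le> m \<Longrightarrow> m mod d = n mod d \<Longrightarrow> d dvd (m - n)"
  using mod_eq_dvd_iff_nat by blast


lemma pw_Suc_right: "pw v (Suc m) = pw v m @ v"
  using pw_add[of v m 1] by (simp add: pw_def)

lemma modh: "0 < (b::nat) \<Longrightarrow> a < b \<Longrightarrow> (i*b + a) mod b = a \<and> (i*b + a) div b = i"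
  by simp

lemma sg_map_upt: "b \<le> N \<Longrightarrow> sg (map f [0..<N]) a b = concat (map f [a..<b])"
proof (cases "a \<le> b")
  case True
  assume "b \<le> N"
  then have "take (b - a) [a..<N] = [a..<b]" using True by (simp add: take_upt)
  then show ?thesis unfolding sg_def by (simp add: take_map drop_map)
next
  case False then show ?thesis unfolding sg_def by simp
qed

context patt begin

definition fx :: "nat \<Rightarrow> nat \<Rightarrow> 'a list" where
  "fx K j = (if j mod (Suc K) = 0 then us!(j div Suc K) else vs!(j div Suc K))"

definition fseg :: "nat \<Rightarrow> nat \<Rightarrow> nat \<Rightarrow> 'a list" where
  "fseg K a b = concat (map (fx K) [a..<b])"

lemma fx_u: "fx K (i * Suc K) = us!i"
  using modh[of "Suc K" 0 i] unfolding fx_def by (simp only: add_0_right) simp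

lemma fx_v: "t < K \<Longrightarrow> fx K (i * Suc K + Suc t) = vs!i"
  using modh[of "Suc K" "Suc t" i] unfolding fx_def by (simp only:) simp

lemma fseg_split: "a \<le> b \<Longrightarrow> b \<le> c \<Longrightarrow> fseg K a c = fseg K a b @ fseg K b c"
  unfolding fseg_def using upt_add_eq_append[of a b "c - b"] by simp

lemma fseg_one: "fseg K a (Suc a) = fx K a"
  unfolding fseg_def by simp

lemma fseg_Suc: "a \<le> b \<Longrightarrow> fseg K a (Suc b) = fseg K a b @ fx K b"
  using fseg_split[of a b "Suc b" K] fseg_one by simp

lemma PRE_Suc: "PRE m (Suc i) = PRE m i @ pw (vs!i) m @ us!(Suc i)"
  unfolding PRE_def by simp

lemma X1: "t \<le> K \<Longrightarrow> fseg K (i * Suc K + 1) (i * Suc K + 1 + t) = pw (vs!i) t"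
proof (induction t)
  case 0 then show ?case unfolding fseg_def by simp
next
  case (Suc t)
  define a where "a = i * Suc K + 1"
  have "fseg K a (a + Suc t) = fseg K a (a + t) @ fx K (a + t)"
    using fseg_Suc[of a "a + t" K] by simp
  moreover have "fx K (a + t) = vs!i" using fx_v[of t K i] Suc.prems unfolding a_def by simp
  moreover have "fseg K a (a + t) = pw (vs!i) t" using Suc unfolding a_def by simp
  ultimately show ?case unfolding a_def[symmetric] by (simp add: pw_Suc_right)
qed

lemma X2: "i \<le> n \<Longrightarrow> fseg K 0 (i * Suc K + 1) = PRE K i"
proof (induction i)
  case 0 then show ?case unfolding fseg_def PRE_def fx_def by simp
next
  case (Suc i)
  define a where "a = i * Suc K + 1"
  have e: "Suc i * Suc K + 1 = Suc (a + K)" unfolding a_def by simp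
  have "fseg K 0 (Suc (a + K)) = fseg K 0 a @ fseg K a (a + K) @ fx K (a + K)"
    using fseg_Suc[of 0 "a + K" K] fseg_split[of 0 a "a + K" K] by simp
  moreover have "fx K (a + K) = us!(Suc i)"
  proof -
    have e2: "a + K = Suc i * Suc K" unfolding a_def by simp
    show ?thesis by (simp only: e2 fx_u)
  qed
  moreover have "fseg K a (a + K) = pw (vs!i) K" using X1[of K K i] unfolding a_def by simp
  moreover have "fseg K 0 a = PRE K i" using Suc unfolding a_def by simp
  ultimately show ?case unfolding e by (simp add: PRE_Suc)
qed

lemma X12: "i \<le> n \<Longrightarrow> t \<le> K \<Longrightarrow> fseg K 0 (i * Suc K + 1 + t) = PRE K i @ pw (vs!i) t"
  using fseg_split[of 0 "i * Suc K + 1" "i * Suc K + 1 + t" K] X1[of t K i] X2[of i K] by simp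

lemma YK: "fseg K 0 (n * Suc K + 1) = Y K"
  using X2[of n K] Y_PRE by simp

lemma blk_le: "i < n \<Longrightarrow> t \<le> K \<Longrightarrow> i * Suc K + 1 + t \<le> n * Suc K + 1"
proof -
  assume i: "i < n" and t: "t \<le> K"
  have "Suc i * Suc K \<le> n * Suc K" using i by (intro mult_le_mono1) simp
  then show ?thesis using t by simp
qed

lemma X3: "i < n \<Longrightarrow> t \<le> K \<Longrightarrow> fseg K (i * Suc K + 1 + t) (n * Suc K + 1) = pw (vs!i) (K - t) @ SUF K i"
proof -
  assume i: "i < n" and t: "t \<le> K"
  have "Y K = fseg K 0 (i * Suc K + 1 + t) @ fseg K (i * Suc K + 1 + t) (n * Suc K + 1)"
    using YK fseg_split[of 0 _ _ K, OF _ blk_le[OF i t]] by simp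
  also have "fseg K 0 (i * Suc K + 1 + t) = PRE K i @ pw (vs!i) t" using X12 i t by simp
  finally have "Y K = PRE K i @ pw (vs!i) t @ fseg K (i * Suc K + 1 + t) (n * Suc K + 1)" by simp
  moreover have "Y K = PRE K i @ pw (vs!i) t @ pw (vs!i) (K - t) @ SUF K i"
    using Y_split[OF i, of K] pw_add[of "vs!i" t "K - t"] t by simp
  ultimately show ?thesis by simp
qed

end

locale fine = patt +
  fixes c0 k M :: nat and Ws Ys :: "'a list list"
  assumes irr0: "\<And>i M'. i < length vs \<Longrightarrow> \<not> sw d (Y c0) (PRE M' i @ SUF M' i)"
    and Mc: "c0 \<le> M"
    and XW: "list_all2 (sw d) (map (fx (2*c0+k)) [0..<length vs * Suc (2*c0+k) + 1]) Ws"
    and WY: "list_all2 (sw d) Ws Ys"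
    and YM: "concat Ys = Y M"
begin

abbreviation "K \<equiv> 2*c0+k"
abbreviation "N \<equiv> n * Suc K + 1"
abbreviation "Xs \<equiv> map (fx K) [0..<N]"

lemma lenW: "length Ws = N" using XW list_all2_lengthD by fastforce
lemma lenY: "length Ys = N" using WY lenW list_all2_lengthD by fastforce

lemma XY: "list_all2 (sw d) Xs Ys"
  by (rule list_all2_trans[OF _ XW WY]) (rule sw_trans)

lemma sgX: "b \<le> N \<Longrightarrow> sg Xs a b = fseg K a b"
  unfolding fseg_def by (rule sg_map_upt)

lemma posc: "j \<le> N \<Longrightarrow> pos Ys j mod d = length (fseg K 0 j) mod d"
  unfolding pos_def using sw_len_mod[OF sg_mono[OF XY, of 0 j]] sgX by simp

lemma segY: "a \<le> b \<Longrightarrow> b \<le> N \<Longrightarrow> sg Ys a b = take (pos Ys b - pos Ys a) (drop (pos Ys a) (Y M))"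
  using sg_take_drop[of a b Ys] lenY YM by (simp add: drop_take)

lemma posN: "pos Ys N = length (Y M)"
  using pos_all[of Ys] lenY YM by simp

lemma pos0: "pos Ys 0 = 0" unfolding pos_def sg_def by simp

lemma swXY: "b \<le> N \<Longrightarrow> sw d (fseg K a b) (sg Ys a b)"
  using sg_mono[OF XY, of a b] sgX by simp

lemma len_pw_mod: "i < n \<Longrightarrow> length (X @ pw (vs!i) t) mod d = length X mod d"
  using pw_dvd[OF dvn, of i t] by (auto elim!: dvdE)

lemma anchor_left: "i < n \<Longrightarrow> length (PRE M i) < pos Ys (i * Suc K + 1 + c0)"
proof (rule ccontr)
  assume i: "i < n" and "\<not> length (PRE M i) < pos Ys (i * Suc K + 1 + c0)"
  define B where "B = i * Suc K + 1 + c0"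
  define p where "p = pos Ys B"
  define L where "L = length (PRE M i)"
  have pL: "p \<le> L" using \<open>\<not> _\<close> unfolding p_def L_def B_def by simp
  have BN: "B \<le> N" unfolding B_def using blk_le[OF i, of c0 K] by simp
  have X: "fseg K 0 B = PRE K i @ pw (vs!i) c0" unfolding B_def using X12[of i c0 K] i by simp
  have "sw d (fseg K 0 B) (sg Ys 0 B)" using swXY[OF BN] .
  also have "sg Ys 0 B = take p (Y M)" using segY[of 0 B] BN pos0 unfolding p_def by simp
  also have "take p (Y M) = take p (PRE M i)" using Y_split[OF i, of M] pL unfolding L_def by simp
  finally have s1: "sw d (PRE K i @ pw (vs!i) c0) (take p (PRE M i))" using X by simp
  have "p mod d = length (PRE K i @ pw (vs!i) c0) mod d" using posc[OF BN] X unfolding p_def by simp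
  also have "\<dots> = length (PRE K i) mod d" using len_pw_mod[OF i] .
  also have "\<dots> = L mod d" unfolding L_def using PRE_mod[of i K] PRE_mod[of i M] i by simp
  finally have "d dvd (L - p)" using dvd_of_mod[OF pL] by simp
  then have "sw d (take p (PRE M i)) (take p (PRE M i) @ drop p (PRE M i))"
    unfolding L_def by (intro sw_ins_right) simp
  then have s2: "sw d (PRE K i @ pw (vs!i) c0) (PRE M i)" using s1 sw_trans by simp
  have "sw d (PRE c0 i @ pw (vs!i) c0) (PRE K i @ pw (vs!i) c0)"
    using i by (intro sw_append PRE_mono sw_refl) auto
  then have "sw d (PRE c0 i @ pw (vs!i) c0) (PRE M i)" using s2 sw_trans by blast
  then have "sw d ((PRE c0 i @ pw (vs!i) c0) @ SUF c0 i) (PRE M i @ SUF M i)"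
    using SUF_mono[OF Mc] by (rule sw_append)
  then have "sw d (Y c0) (PRE M i @ SUF M i)" using Y_split[OF i, of c0] by simp
  then show False using irr0[OF i] by blast
qed

lemma anchor_right: "i < n \<Longrightarrow> pos Ys (i * Suc K + 1 + (c0 + k)) < length (PRE M i) + length (pw (vs!i) M)"
proof (rule ccontr)
  assume i: "i < n" and "\<not> pos Ys (i * Suc K + 1 + (c0 + k)) < length (PRE M i) + length (pw (vs!i) M)"
  define B where "B = i * Suc K + 1 + (c0 + k)"
  define q where "q = pos Ys B"
  define E where "E = length (PRE M i) + length (pw (vs!i) M)"
  define S where "S = SUF M i"
  have Eq: "E \<le> q" using \<open>\<not> _\<close> unfolding q_def E_def B_def by simp
  have BN: "B \<le> N" unfolding B_def using blk_le[OF i, of "c0+k" K] by simp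
  have X: "fseg K B N = pw (vs!i) c0 @ SUF K i" unfolding B_def using X3[of i "c0+k" K] i by simp
  have YMs: "Y M = (PRE M i @ pw (vs!i) M) @ S" using Y_split[OF i, of M] unfolding S_def by simp
  have qle: "q \<le> length (Y M)" using pos_mono[OF BN, of Ys] posN unfolding q_def by simp
  have "sw d (fseg K B N) (sg Ys B N)" using swXY by simp
  also have "sg Ys B N = drop q (Y M)" using segY[OF BN] posN qle unfolding q_def by simp
  also have "drop q (Y M) = drop (q - E) S" using YMs Eq unfolding E_def by simp
  finally have s1: "sw d (pw (vs!i) c0 @ SUF K i) (drop (q - E) S)" using X by simp
  have "length (drop (q - E) S) mod d = length (pw (vs!i) c0 @ SUF K i) mod d" using sw_len_mod[OF s1] .
  also have "\<dots> = length S mod d" unfolding S_def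
    using SUF_mod[of K i] SUF_mod[of M i] pw_dvd[OF dvn[OF i], of c0] by (auto elim!: dvdE)
  finally have m: "(length S - (q - E)) mod d = length S mod d" by simp
  have tle: "q - E \<le> length S" using qle YMs Eq unfolding E_def by simp
  have "d dvd (length S - (length S - (q - E)))" using dvd_of_mod[OF _ m[symmetric]] by simp
  then have "d dvd length (take (q - E) S)" using tle by simp
  then have "sw d (drop (q - E) S) (take (q - E) S @ drop (q - E) S)" by (rule sw_ins_left)
  then have s2: "sw d (pw (vs!i) c0 @ SUF K i) S" using s1 sw_trans by simp
  have "sw d (pw (vs!i) c0 @ SUF c0 i) (pw (vs!i) c0 @ SUF K i)"
    by (intro sw_append SUF_mono sw_refl) auto
  then have "sw d (pw (vs!i) c0 @ SUF c0 i) S" using s2 sw_trans by blast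
  then have "sw d (PRE c0 i @ pw (vs!i) c0 @ SUF c0 i) (PRE M i @ S)"
    using PRE_mono[OF Mc, of i] i by (intro sw_append) auto
  then have "sw d (Y c0) (PRE M i @ SUF M i)" using Y_split[OF i, of c0] unfolding S_def by simp
  then show False using irr0[OF i] by blast
qed

definition st :: "nat \<Rightarrow> nat" where
  "st j = (if j = 0 then 0 else (j - 1) * Suc K + 1 + (c0 + k))"
definition en :: "nat \<Rightarrow> nat" where
  "en j = (if j < n then j * Suc K + 1 + c0 else N)"

lemma app_dvd_mod: "d dvd length Z \<Longrightarrow> length (X @ Z) mod d = length X mod d"
  by (auto elim!: dvdE)

lemma A_dvd: "j \<le> n \<Longrightarrow> d dvd length (A c j)"
  unfolding A_def by (auto intro!: pw_dvd dvn)
lemma B_dvd: "d dvd length (B c j)"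
  unfolding B_def by (auto intro!: pw_dvd dvn)

lemma st_en: "j \<le> n \<Longrightarrow> st j \<le> en j"
proof (cases j)
  case 0 then show ?thesis unfolding st_def by simp
next
  case (Suc j')
  assume "j \<le> n"
  have "st j = j' * Suc K + 1 + (c0 + k)" unfolding st_def Suc by simp
  also have "\<dots> \<le> j * Suc K + 1 + c0" unfolding Suc by simp
  finally have 1: "st j \<le> j * Suc K + 1 + c0" .
  show ?thesis
  proof (cases "j < n")
    case True then show ?thesis using 1 unfolding en_def by simp
  next
    case False then have "j = n" using \<open>j \<le> n\<close> by simp
    have "st j = j' * Suc K + 1 + (c0 + k)" unfolding st_def Suc by simp
    also have "\<dots> \<le> Suc j' * Suc K + 1" by simp
    finally have 2: "st j \<le> Suc j' * Suc K + 1" .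
    have "en j = Suc j' * Suc K + 1" unfolding en_def using False \<open>j = n\<close> Suc by simp
    then show ?thesis using 2 by simp
  qed
qed

lemma en_st: "j < n \<Longrightarrow> en j \<le> st (Suc j)"
  unfolding en_def st_def by simp

lemma en_le: "en j \<le> N"
  unfolding en_def using blk_le[of j c0 K] by auto

lemma st_le: "j \<le> n \<Longrightarrow> st j \<le> N"
  using st_en en_le le_trans by blast

lemma fseg_en: "j \<le> n \<Longrightarrow> fseg K 0 (en j) = PRE K j @ B c0 j"
proof (cases "j < n")
  case True
  then have "fseg K 0 (en j) = PRE K j @ pw (vs!j) c0" unfolding en_def using X12[of j c0 K] by simp
  then show ?thesis unfolding B_def using True by simp
next
  case False
  assume "j \<le> n"
  then have "j = n" using False by simp
  then have "fseg K 0 (en j) = Y K" unfolding en_def using YK by simp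
  then show ?thesis unfolding B_def using False \<open>j = n\<close> Y_PRE by simp
qed

lemma fseg_st: "0 < j \<Longrightarrow> j \<le> n \<Longrightarrow> fseg K 0 (st j) = PRE K (j-1) @ pw (vs!(j-1)) (c0 + k)"
proof -
  assume j: "0 < j" "j \<le> n"
  then have "st j = (j - 1) * Suc K + 1 + (c0 + k)" unfolding st_def by simp
  then show ?thesis using X12[of "j-1" "c0+k" K] j by simp
qed

lemma Fu: "j \<le> n \<Longrightarrow> fseg K (st j) (en j) = A c0 j @ us!j @ B c0 j"
proof (cases j)
  case 0
  assume "j \<le> n"
  then have "fseg K (st j) (en j) = PRE K 0 @ B c0 0" using fseg_en[of 0] 0 unfolding st_def by simp
  then show ?thesis using 0 unfolding A_def PRE_def by simp
next
  case (Suc j')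
  assume j: "j \<le> n"
  have "fseg K 0 (en j) = fseg K 0 (st j) @ fseg K (st j) (en j)"
    using fseg_split[of 0 "st j" "en j" K] st_en[OF j] by simp
  then have "PRE K j @ B c0 j = PRE K j' @ pw (vs!j') (c0 + k) @ fseg K (st j) (en j)"
    using fseg_en[OF j] fseg_st[of j] j Suc by simp
  moreover have "PRE K j = PRE K j' @ pw (vs!j') (c0 + k) @ pw (vs!j') c0 @ us!j"
  proof -
    have e: "2*c0+k = (c0+k)+c0" by simp
    have "pw (vs!j') K = pw (vs!j') (c0 + k) @ pw (vs!j') c0" by (simp only: e pw_add)
    then show ?thesis using PRE_Suc[of K j'] Suc by simp
  qed
  ultimately have "fseg K (st j) (en j) = pw (vs!j') c0 @ us!j @ B c0 j" by simp
  then show ?thesis unfolding A_def using Suc by simp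
qed

lemma telesc: "m \<le> n \<Longrightarrow> concat (map (\<lambda>j. sg W (st j) (en j) @ sg W (en j) (st (Suc j))) [0..<m]) = sg W 0 (st m)"
proof (induction m)
  case 0 then show ?case unfolding st_def sg_def by simp
next
  case (Suc m)
  then have m: "m < n" by simp
  have "sg W 0 (st (Suc m)) = sg W 0 (st m) @ sg W (st m) (st (Suc m))"
    using sg_split[of 0 "st m" "st (Suc m)" W] st_en[of m] en_st[OF m] m by simp
  also have "sg W (st m) (st (Suc m)) = sg W (st m) (en m) @ sg W (en m) (st (Suc m))"
    using sg_split st_en[of m] en_st[OF m] m by simp
  finally show ?case using Suc by simp
qed

lemma pos_en_lo: "j \<le> n \<Longrightarrow> pos Ys (en j) mod d = length (PRE M j) mod d"
proof -
  assume j: "j \<le> n"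
  have "pos Ys (en j) mod d = length (PRE K j @ B c0 j) mod d" using posc[OF en_le] fseg_en[OF j] by simp
  also have "\<dots> = length (PRE K j) mod d" using app_dvd_mod[OF B_dvd] .
  also have "\<dots> = length (PRE M j) mod d" using PRE_mod[OF j, of K] PRE_mod[OF j, of M] by simp
  finally show ?thesis .
qed

lemma pos_st_lo: "0 < j \<Longrightarrow> j \<le> n \<Longrightarrow> pos Ys (st j) mod d = length (PRE M (j-1)) mod d"
proof -
  assume j: "0 < j" "j \<le> n"
  have "pos Ys (st j) mod d = length (PRE K (j-1) @ pw (vs!(j-1)) (c0+k)) mod d"
    using posc[OF st_le[OF j(2)]] fseg_st[OF j] by simp
  also have "\<dots> = length (PRE K (j-1)) mod d" using app_dvd_mod[OF pw_dvd[OF dvn]] j by simp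
  also have "\<dots> = length (PRE M (j-1)) mod d" using PRE_mod[of "j-1" K] PRE_mod[of "j-1" M] j by simp
  finally show ?thesis .
qed

lemma bvs_ok: "i < n \<Longrightarrow> sw d (pw (vs!i) k) (sg Ws (en i) (st (Suc i))) \<and> sg Ws (en i) (st (Suc i)) \<in> down_d d (wstar (vs!i))"
proof -
  assume i: "i < n"
  have ei: "en i = i * Suc K + 1 + c0" unfolding en_def using i by simp
  have si: "st (Suc i) = i * Suc K + 1 + (c0 + k)" unfolding st_def by simp
  have sN: "st (Suc i) \<le> N" using st_le[of "Suc i"] i by simp
  have eS: "en i \<le> st (Suc i)" using en_st[OF i] .
  have "fseg K 0 (st (Suc i)) = fseg K 0 (en i) @ fseg K (en i) (st (Suc i))"
    using fseg_split[of 0 "en i" "st (Suc i)" K] eS by simp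
  then have "PRE K i @ pw (vs!i) (c0 + k) = PRE K i @ pw (vs!i) c0 @ fseg K (en i) (st (Suc i))"
    using X12[of i "c0+k" K] X12[of i c0 K] i ei si by simp
  then have fk: "fseg K (en i) (st (Suc i)) = pw (vs!i) k" using pw_add[of "vs!i" c0 k] by simp
  have "sw d (sg Xs (en i) (st (Suc i))) (sg Ws (en i) (st (Suc i)))" using sg_mono[OF XW] .
  then have part1: "sw d (pw (vs!i) k) (sg Ws (en i) (st (Suc i)))" using sgX[OF sN] fk by simp
  define p where "p = pos Ys (en i)"
  define q where "q = pos Ys (st (Suc i))"
  define L where "L = length (PRE M i)"
  define E where "E = L + length (pw (vs!i) M)"
  have Lp: "L < p" unfolding p_def L_def ei using anchor_left[OF i] .
  have qE: "q < E" unfolding q_def E_def L_def si using anchor_right[OF i] .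
  have pq: "p \<le> q" unfolding p_def q_def using pos_mono[OF eS] .
  have YMs: "Y M = PRE M i @ pw (vs!i) M @ SUF M i" using Y_split[OF i] .
  have EY: "E \<le> length (Y M)" unfolding E_def L_def using YMs by simp
  have pm: "p mod d = L mod d" unfolding p_def L_def using pos_en_lo[of i] i by simp
  have qm: "q mod d = L mod d"
  proof -
    have "q mod d = length (PRE K i @ pw (vs!i) (c0+k)) mod d"
      unfolding q_def using posc[OF sN] X12[of i "c0+k" K] i si by simp
    also have "\<dots> = length (PRE K i) mod d" using app_dvd_mod[OF pw_dvd[OF dvn[OF i]]] .
    also have "\<dots> = L mod d" unfolding L_def using PRE_mod[of i K] PRE_mod[of i M] i by simp
    finally show ?thesis .
  qed
  have Em: "E mod d = L mod d" unfolding E_def using app_dvd_mod[OF pw_dvd[OF dvn[OF i]], of "replicate L undefined"]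
    by simp
  have d1: "d dvd (p - L)" using dvd_of_mod[of L p d] Lp pm by simp
  have d2: "d dvd (E - q)" using dvd_of_mod[of q E d] qE qm Em by simp
  have "sw d (sg Ws (en i) (st (Suc i))) (sg Ys (en i) (st (Suc i)))" using sg_mono[OF WY] .
  also have "sg Ys (en i) (st (Suc i)) = take (q - p) (drop p (Y M))"
    using segY[OF eS sN] unfolding p_def q_def by simp
  finally have s1: "sw d (sg Ws (en i) (st (Suc i))) (take (q - p) (drop p (Y M)))" .
  have "sw d (take (q - p) (drop p (Y M))) (take (E - L) (drop L (Y M)))"
    using sub_seg[of L p q E "Y M" d] Lp pq qE EY d1 d2 by simp
  also have "take (E - L) (drop L (Y M)) = pw (vs!i) M" unfolding E_def L_def using YMs by simp
  finally have "sw d (sg Ws (en i) (st (Suc i))) (pw (vs!i) M)" using s1 sw_trans by blast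
  moreover have "pw (vs!i) M \<in> wstar (vs!i)" unfolding wstar_pw by blast
  ultimately have "sg Ws (en i) (st (Suc i)) \<in> down_d d (wstar (vs!i))"
    unfolding down_d_def subword_d_sw by blast
  then show ?thesis using part1 by blast
qed

lemma Y_ctx: "j \<le> n \<Longrightarrow> \<exists>P R. Y M = P @ A M j @ us!j @ B M j @ R \<and> length P = (if j = 0 then 0 else length (PRE M (j-1)))
   \<and> length (P @ A M j @ us!j) = length (PRE M j)"
proof -
  assume j: "j \<le> n"
  obtain R where R: "Y M = PRE M j @ B M j @ R"
  proof (cases "j < n")
    case True then show ?thesis using that[of "SUF M j"] Y_split[OF True, of M] unfolding B_def by simp
  next
    case False then have "j = n" using j by simp
    then show ?thesis using that[of "[]"] Y_PRE unfolding B_def by simp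
  qed
  show ?thesis
  proof (cases j)
    case 0
    then have "PRE M j = [] @ A M j @ us!j" unfolding PRE_def A_def by simp
    then show ?thesis using R 0 by (rule_tac x="[]" in exI, rule_tac x=R in exI) simp
  next
    case (Suc j')
    then have "PRE M j = PRE M j' @ A M j @ us!j" unfolding A_def using PRE_Suc by simp
    then show ?thesis using R Suc by (rule_tac x="PRE M j'" in exI, rule_tac x=R in exI) simp
  qed
qed

lemma bus_ok: "j \<le> n \<Longrightarrow> sw d (us!j) (sg Ws (st j) (en j)) \<and>
   sg Ws (st j) (en j) \<in> down_d d {a @ us ! j @ b | a b. a \<in> left_ctx vs j \<and> b \<in> right_ctx vs j}"
proof -
  assume j: "j \<le> n"
  have sE: "st j \<le> en j" using st_en[OF j] .
  have "sw d (us!j) (us!j @ B c0 j)" using B_dvd by (rule sw_ins_right)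
  then have "sw d (us!j) (A c0 j @ us!j @ B c0 j)" using sw_ins_left[OF A_dvd[OF j]] sw_trans by blast
  moreover have "sw d (sg Xs (st j) (en j)) (sg Ws (st j) (en j))" using sg_mono[OF XW] .
  ultimately have part1: "sw d (us!j) (sg Ws (st j) (en j))" using sgX[OF en_le] Fu[OF j] sw_trans by metis
  obtain P R where PR: "Y M = P @ A M j @ us!j @ B M j @ R"
    "length P = (if j = 0 then 0 else length (PRE M (j-1)))" "length (P @ A M j @ us!j) = length (PRE M j)"
    using Y_ctx[OF j] by blast
  define S where "S = length P"
  define E where "E = length (PRE M j) + length (B M j)"
  define p where "p = pos Ys (st j)"
  define q where "q = pos Ys (en j)"
  have target: "take (E - S) (drop S (Y M)) = A M j @ us!j @ B M j"
    using PR unfolding S_def E_def by simp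
  have EY: "E \<le> length (Y M)" using PR unfolding E_def by simp
  have pq: "p \<le> q" unfolding p_def q_def using pos_mono[OF sE] .
  have Sp: "S \<le> p \<and> d dvd (p - S)"
  proof (cases "j = 0")
    case True then show ?thesis unfolding S_def p_def st_def using PR(2) pos0 by simp
  next
    case False
    then have j0: "0 < j" by simp
    have "length (PRE M (j-1)) < pos Ys ((j-1) * Suc K + 1 + c0)" using anchor_left[of "j-1"] j j0 by simp
    also have "\<dots> \<le> p" unfolding p_def st_def using False by (intro pos_mono) simp
    finally have 1: "S \<le> p" unfolding S_def using PR(2) False by simp
    have "p mod d = S mod d" unfolding p_def S_def using pos_st_lo[OF j0 j] PR(2) False by simp
    then show ?thesis using 1 dvd_of_mod[OF 1] by simp
  qed
  have qE: "q \<le> E \<and> d dvd (E - q)"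
  proof -
    have 1: "q \<le> E"
    proof (cases "j < n")
      case True
      have "q \<le> pos Ys (j * Suc K + 1 + (c0 + k))" unfolding q_def en_def using True by (intro pos_mono) simp
      also have "\<dots> < length (PRE M j) + length (pw (vs!j) M)" using anchor_right[OF True] .
      finally show ?thesis unfolding E_def B_def using True by simp
    next
      case False then have "j = n" using j by simp
      then have "q = length (Y M)" unfolding q_def en_def using posN by simp
      then show ?thesis using EY \<open>j = n\<close> unfolding E_def B_def using Y_PRE by simp
    qed
    have "q mod d = length (PRE M j) mod d" unfolding q_def using pos_en_lo[OF j] .
    also have "\<dots> = E mod d" unfolding E_def using app_dvd_mod[OF B_dvd] by simp
    finally show ?thesis using 1 dvd_of_mod[OF 1] by simp
  qed
  have "sw d (sg Ws (st j) (en j)) (sg Ys (st j) (en j))" using sg_mono[OF WY] .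
  also have "sg Ys (st j) (en j) = take (q - p) (drop p (Y M))"
    using segY[OF sE en_le] unfolding p_def q_def by simp
  finally have s1: "sw d (sg Ws (st j) (en j)) (take (q - p) (drop p (Y M)))" .
  have "sw d (take (q - p) (drop p (Y M))) (take (E - S) (drop S (Y M)))"
    using sub_seg[of S p q E "Y M" d] Sp pq qE EY by simp
  then have "sw d (sg Ws (st j) (en j)) (A M j @ us!j @ B M j)" using s1 target sw_trans by metis
  then have "sg Ws (st j) (en j) \<in> down_d d {a @ us ! j @ b | a b. a \<in> left_ctx vs j \<and> b \<in> right_ctx vs j}"
    using ctx_down[OF j] by blast
  then show ?thesis using part1 by blast
qed

lemma decomp: "\<exists>bus bvs. length bus = length us \<and> length bvs = n \<and> interleave bus bvs = concat Ws \<and>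
   (\<forall>i<n. sw d (pw (vs!i) k) (bvs!i) \<and> bvs!i \<in> down_d d (wstar (vs!i))) \<and>
   (\<forall>i<length us. sw d (us!i) (bus!i) \<and>
       bus!i \<in> down_d d {a @ us ! i @ b | a b. a \<in> left_ctx vs i \<and> b \<in> right_ctx vs i})"
proof -
  define bus where "bus = map (\<lambda>j. sg Ws (st j) (en j)) [0..<Suc n]"
  define bvs where "bvs = map (\<lambda>j. sg Ws (en j) (st (Suc j))) [0..<n]"
  have l: "length bus = length us" "length bvs = n" unfolding bus_def bvs_def using lenus by auto
  have "interleave bus bvs = concat (map (\<lambda>j. bus!j @ bvs!j) [0..<n]) @ bus!n"
    using interleave_conv[of bus bvs] l lenus by simp
  also have "map (\<lambda>j. bus!j @ bvs!j) [0..<n] = map (\<lambda>j. sg Ws (st j) (en j) @ sg Ws (en j) (st (Suc j))) [0..<n]"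
    unfolding bus_def bvs_def by (intro map_cong) (auto simp del: upt_Suc)
  also have "concat \<dots> = sg Ws 0 (st n)" using telesc[of n Ws] by simp
  also have "bus!n = sg Ws (st n) N" unfolding bus_def using en_def by (simp del: upt_Suc)
  also have "sg Ws 0 (st n) @ sg Ws (st n) N = sg Ws 0 N" using sg_split[of 0 "st n" N Ws] st_le[of n] by simp
  also have "\<dots> = concat Ws" using sg_all[of Ws] lenW by simp
  finally have iw: "interleave bus bvs = concat Ws" .
  have "\<forall>i<n. sw d (pw (vs!i) k) (bvs!i) \<and> bvs!i \<in> down_d d (wstar (vs!i))"
    unfolding bvs_def using bvs_ok by simp
  moreover have "\<forall>i<length us. sw d (us!i) (bus!i) \<and>
       bus!i \<in> down_d d {a @ us ! i @ b | a b. a \<in> left_ctx vs i \<and> b \<in> right_ctx vs i}"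
    unfolding bus_def using bus_ok lenus by (simp del: upt_Suc)
  ultimately show ?thesis using l iw by blast
qed

end

context patt begin

lemma adh_imp_assoc:
  assumes irr: "\<forall>i<n. \<exists>c. \<forall>M. \<not> sw d (Y c) (PRE M i @ SUF M i)"
    and adh: "down_d d (pat_lang us vs) \<in> Adh_d d L"
  shows "associated d us vs L"
  unfolding associated_def
proof
  fix k :: nat
  have "\<exists>c. \<forall>i<n. \<forall>M. \<not> sw d (Y c) (PRE M i @ SUF M i)"
  proof (rule uniform_bound)
    fix i assume "i < n" then show "\<exists>c. \<forall>M. \<not> sw d (Y c) (PRE M i @ SUF M i)" using irr by blast
  next
    fix i a b assume h: "\<forall>M. \<not> sw d (Y a) (PRE M i @ SUF M i)" "a \<le> b"
    show "\<forall>M. \<not> sw d (Y b) (PRE M i @ SUF M i)"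
    proof (intro allI notI)
      fix M assume "sw d (Y b) (PRE M i @ SUF M i)"
      then have "sw d (Y a) (PRE M i @ SUF M i)" using Y_mono[OF h(2)] sw_trans by blast
      then show False using h(1) by blast
    qed
  qed
  then obtain c0 where c0: "\<And>i M. i < n \<Longrightarrow> \<not> sw d (Y c0) (PRE M i @ SUF M i)" by blast
  define K where "K = 2*c0+k"
  let ?I = "down_d d (pat_lang us vs)"
  have "Y K \<in> ?I" unfolding down_char using sw_refl by blast
  then have "Y K \<in> down_d d (L \<inter> ?I)" using adh unfolding Adh_d_def by blast
  then obtain w where w: "w \<in> L" "w \<in> ?I" "sw d (Y K) w" unfolding down_d_def subword_d_sw by blast
  then obtain M0 where "sw d w (Y M0)" unfolding down_char by blast
  then have wM: "sw d w (Y (M0 + c0))" using Y_mono[of M0 "M0 + c0"] sw_trans by simp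
  have YKc: "Y K = concat (map (fx K) [0..<n * Suc K + 1])" using YK[of K] unfolding fseg_def by simp
  obtain Ws where Ws: "list_all2 (sw d) (map (fx K) [0..<n * Suc K + 1]) Ws" "w = concat Ws"
    using sw_concat_split[of "map (fx K) [0..<n * Suc K + 1]" d w] w(3) YKc by auto
  have "Ws \<noteq> []" using Ws(1) list_all2_lengthD by fastforce
  then obtain Ys where Ys: "list_all2 (sw d) Ws Ys" "Y (M0 + c0) = concat Ys"
    using sw_concat_split[of Ws d "Y (M0 + c0)"] wM Ws(2) by auto
  interpret F: fine d us vs c0 k "M0 + c0" Ws Ys
  proof unfold_locales
    show "\<And>i M'. i < n \<Longrightarrow> \<not> sw d (Y c0) (PRE M' i @ SUF M' i)" using c0 by blast
    show "c0 \<le> M0 + c0" by simp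
    show "list_all2 (sw d) (map (fx (2 * c0 + k)) [0..<n * Suc (2 * c0 + k) + 1]) Ws" using Ws(1) unfolding K_def .
    show "list_all2 (sw d) Ws Ys" using Ys(1) .
    show "concat Ys = Y (M0 + c0)" using Ys(2) by simp
  qed
  obtain bus bvs where bb: "length bus = length us" "length bvs = n" "interleave bus bvs = concat Ws"
    "\<forall>i<n. sw d (pw (vs!i) k) (bvs!i) \<and> bvs!i \<in> down_d d (wstar (vs!i))"
    "\<forall>i<length us. sw d (us!i) (bus!i) \<and>
       bus!i \<in> down_d d {a @ us ! i @ b | a b. a \<in> left_ctx vs i \<and> b \<in> right_ctx vs i}"
    using F.decomp by blast
  have "interleave bus bvs \<in> L" using bb(3) Ws(2) w(1) by simp
  show "\<exists>bus bvs. length bus = length us \<and> length bvs = length vs \<and> interleave bus bvs \<in> L \<and>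
      (\<forall>i<length vs. subword_d d (concat (replicate k (vs ! i))) (bvs ! i) \<and> bvs ! i \<in> down_d d (wstar (vs ! i))) \<and>
      (\<forall>i<length us. subword_d d (us ! i) (bus ! i) \<and>
         bus ! i \<in> down_d d {a @ us ! i @ b |a b. a \<in> left_ctx vs i \<and> b \<in> right_ctx vs i})"
    unfolding subword_d_sw pw_def[symmetric] using bb \<open>interleave bus bvs \<in> L\<close> by blast
qed

lemma irr_extract:
  assumes "irreducible_pattern d us vs"
  shows "\<forall>i<n. \<exists>c. \<forall>M. \<not> sw d (Y c) (PRE M i @ SUF M i)"
proof (intro allI impI)
  fix i assume i: "i < n"
  then have ss: "down_d d (pat_lang us (vs[i := []])) \<subset> down_d d (pat_lang us vs)"
    using assms unfolding irreducible_pattern_def by blast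
  then obtain z where z: "z \<in> down_d d (pat_lang us vs)" "z \<notin> down_d d (pat_lang us (vs[i := []]))" by blast
  then obtain c where zc: "sw d z (Y c)" unfolding down_char by blast
  show "\<exists>c. \<forall>M. \<not> sw d (Y c) (PRE M i @ SUF M i)"
  proof (rule exI[of _ c], intro allI notI)
    fix M assume "sw d (Y c) (PRE M i @ SUF M i)"
    then have zs: "sw d z (PRE M i @ SUF M i)" using zc sw_trans by blast
    have "PRE M i @ SUF M i \<in> pat_lang us (vs[i := []])"
      unfolding pat_lang_def Y_del[OF i, of M, symmetric]
      by (rule CollectI, rule exI[of _ "map (\<lambda>v. pw v M) (vs[i:=[]])"]) (auto simp: wstar_pw)
    then have "z \<in> down_d d (pat_lang us (vs[i := []]))" using zs unfolding down_d_def subword_d_sw by blast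
    then show False using z(2) by blast
  qed
qed

end

theorem mainTheorem15:
  fixes d :: nat and us vs :: "'a list list" and L :: "'a list set"
  assumes "finite (UNIV :: 'a set)"
    and "d \<ge> 1"
    and "irreducible_pattern d us vs"
  shows "down_d d (pat_lang us vs) \<in> Adh_d d L \<longleftrightarrow> associated d us vs L"
proof -
  have lp: "loop_pattern d us vs" using assms(3) unfolding irreducible_pattern_def by blast
  interpret P: patt d us vs
    using lp unfolding loop_pattern_def by unfold_locales auto
  show ?thesis
    using P.adh_imp_assoc[OF P.irr_extract[OF assms(3)]] P.assoc_imp_adh by blast
qed

end
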